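(* Let $R$ be a finite group, let $S\subseteq R$, and let $K,H$ be subgroups of $R$ such that (1) $1<K\trianglelefteq H<R$, (2) $K(S\setminus H)=S\setminus H=(S\setminus H)K$, and (3) $\mathrm{Aut}(R)_S=1$. Then $\mathrm{Cay}(R,S)$ is not a DRR, so $R$ is not DRR-detecting; and if moreover $S=S^{-1}$, then $\mathrm{Cay}(R,S)$ is not a GRR, so $R$ is not GRR-detecting.
   Context: For a group $R$ and $S\subseteq R$, the Cayley digraph $\mathrm{Cay}(R,S)$ has vertex set $R$ and an arc from $r$ to $sr$ whenever $s\in S$. It is a DRR if $\mathrm{Aut}(\mathrm{Cay}(R,S))$ equals the right regular representation $\hat R$, and a GRR if additionally $S=S^{-1}$. $\mathrm{Aut}(R)_S$ is the group of automorphisms of $R$ fixing $S$ setwise. $R$ is DRR-detecting if for every $S\subseteq R$, $\mathrm{Aut}(R)_S=1$ implies $\mathrm{Cay}(R,S)$ is a DRR; GRR-detecting if for every $S\subseteq R$ with $S=S^{-1}$, $\mathrm{Aut}(R)_S=1$ implies $\mathrm{Cay}(R,S)$ is a GRR. *)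

theory Defs
  imports "HOL-Algebra.Algebra"
begin

definition cay_arc :: "('a, 'b) monoid_scheme \<Rightarrow> 'a set \<Rightarrow> 'a \<Rightarrow> 'a \<Rightarrow> bool" where
  "cay_arc R S x y \<longleftrightarrow> y \<otimes>\<^bsub>R\<^esub> m_inv R x \<in> S"

definition cay_aut :: "('a, 'b) monoid_scheme \<Rightarrow> 'a set \<Rightarrow> ('a \<Rightarrow> 'a) set" where
  "cay_aut R S = {\<sigma>. \<sigma> \<in> extensional (carrier R) \<and> bij_betw \<sigma> (carrier R) (carrier R) \<and>
      (\<forall>x\<in>carrier R. \<forall>y\<in>carrier R. cay_arc R S (\<sigma> x) (\<sigma> y) \<longleftrightarrow> cay_arc R S x y)}"

definition right_regular :: "('a, 'b) monoid_scheme \<Rightarrow> ('a \<Rightarrow> 'a) set" where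
  "right_regular R = {(\<lambda>x\<in>carrier R. x \<otimes>\<^bsub>R\<^esub> g) | g. g \<in> carrier R}"

definition is_DRR :: "('a, 'b) monoid_scheme \<Rightarrow> 'a set \<Rightarrow> bool" where
  "is_DRR R S \<longleftrightarrow> cay_aut R S = right_regular R"

definition inv_set :: "('a, 'b) monoid_scheme \<Rightarrow> 'a set \<Rightarrow> 'a set" where
  "inv_set R S = m_inv R ` S"

definition is_GRR :: "('a, 'b) monoid_scheme \<Rightarrow> 'a set \<Rightarrow> bool" where
  "is_GRR R S \<longleftrightarrow> is_DRR R S \<and> S = inv_set R S"

definition aut_stab_trivial :: "('a, 'b) monoid_scheme \<Rightarrow> 'a set \<Rightarrow> bool" where
  "aut_stab_trivial R S \<longleftrightarrow>
     (\<forall>\<phi>\<in>iso R R. \<phi> ` S = S \<longrightarrow> (\<forall>x\<in>carrier R. \<phi> x = x))"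

definition DRR_detecting :: "('a, 'b) monoid_scheme \<Rightarrow> bool" where
  "DRR_detecting R \<longleftrightarrow>
     (\<forall>S. S \<subseteq> carrier R \<longrightarrow> aut_stab_trivial R S \<longrightarrow> is_DRR R S)"

definition GRR_detecting :: "('a, 'b) monoid_scheme \<Rightarrow> bool" where
  "GRR_detecting R \<longleftrightarrow>
     (\<forall>S. S \<subseteq> carrier R \<longrightarrow> S = inv_set R S \<longrightarrow> aut_stab_trivial R S \<longrightarrow> is_GRR R S)"

end

theory Submission
  imports Defs
begin

theorem corollary2p3:
  fixes R (structure) and S K H :: "'a set"
  assumes "group R" and "finite (carrier R)"
    and "S \<subseteq> carrier R"
    and "subgroup K R" and "subgroup H R"
    and "K \<noteq> {\<one>}"
    and "K \<subseteq> H" and "normal K (R\<lparr>carrier := H\<rparr>)"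
    and "H \<noteq> carrier R"
    and "K <#> (S - H) = S - H" and "(S - H) <#> K = S - H"
    and "aut_stab_trivial R S"
  shows "\<not> is_DRR R S \<and> \<not> DRR_detecting R \<and>
         (S = inv_set R S \<longrightarrow> \<not> is_GRR R S \<and> \<not> GRR_detecting R)"
proof -
  interpret G: group R by fact
  have Kc: "K \<subseteq> carrier R" using assms(4) subgroup.subset by blast
  have Hc: "H \<subseteq> carrier R" using assms(5) subgroup.subset by blast
  have conj: "x \<otimes> h \<otimes> inv x \<in> K" if "x \<in> H" "h \<in> K" for x h
  proof -
    have "x \<otimes>\<^bsub>R\<lparr>carrier := H\<rparr>\<^esub> h \<otimes>\<^bsub>R\<lparr>carrier := H\<rparr>\<^esub> inv\<^bsub>R\<lparr>carrier := H\<rparr>\<^esub> x \<in> K"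
      using normal.inv_op_closed2[OF assms(8)] that by simp
    then show ?thesis using G.m_inv_consistent[OF assms(5) that(1)] by simp
  qed
  have Lm: "k \<otimes> a \<in> S \<longleftrightarrow> a \<in> S" if "k \<in> K" "a \<in> carrier R" "a \<notin> H" for k a
  proof
    assume "a \<in> S"
    then have "k \<otimes> a \<in> K <#> (S - H)" using that unfolding set_mult_def
      by (intro UN_I[of k] UN_I[of a] singletonI) auto
    then show "k \<otimes> a \<in> S" using assms(10) by simp
  next
    assume ka: "k \<otimes> a \<in> S"
    have kc: "k \<in> carrier R" using that Kc by blast
    have "k \<otimes> a \<notin> H"
    proof
      assume "k \<otimes> a \<in> H"
      then have "inv k \<otimes> (k \<otimes> a) \<in> H"
        using assms(5) assms(7) that(1) kc subgroup.m_closed subgroup.m_inv_closed by (metis subsetD)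
      then show False using that kc by (simp add: G.m_assoc[symmetric])
    qed
    moreover have "inv k \<in> K" by (rule subgroup.m_inv_closed[OF assms(4) that(1)])
    ultimately have "inv k \<otimes> (k \<otimes> a) \<in> K <#> (S - H)" using ka unfolding set_mult_def
      by (intro UN_I[of "inv k"] UN_I[of "k \<otimes> a"] singletonI) auto
    then show "a \<in> S" using assms(10) that kc by (simp add: G.m_assoc[symmetric])
  qed
  have Rm: "a \<otimes> k \<in> S \<longleftrightarrow> a \<in> S" if "k \<in> K" "a \<in> carrier R" "a \<notin> H" for k a
  proof
    assume "a \<in> S"
    then have "a \<otimes> k \<in> (S - H) <#> K" using that unfolding set_mult_def
      by (intro UN_I[of a] UN_I[of k] singletonI) auto
    then show "a \<otimes> k \<in> S" using assms(11) by simp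
  next
    assume ka: "a \<otimes> k \<in> S"
    have kc: "k \<in> carrier R" using that Kc by blast
    have "a \<otimes> k \<notin> H"
    proof
      assume "a \<otimes> k \<in> H"
      then have "(a \<otimes> k) \<otimes> inv k \<in> H"
        using assms(5) assms(7) that(1) kc subgroup.m_closed subgroup.m_inv_closed by (metis subsetD)
      then show False using that kc by (simp add: G.m_assoc)
    qed
    moreover have "inv k \<in> K" by (rule subgroup.m_inv_closed[OF assms(4) that(1)])
    ultimately have "(a \<otimes> k) \<otimes> inv k \<in> (S - H) <#> K" using ka unfolding set_mult_def
      by (intro UN_I[of "a \<otimes> k"] UN_I[of "inv k"] singletonI) auto
    then show "a \<in> S" using assms(11) that kc by (simp add: G.m_assoc)
  qed
  obtain k where k: "k \<in> K" "k \<noteq> \<one>"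
    using assms(6) assms(4) subgroup.one_closed by blast
  have kc: "k \<in> carrier R" using k Kc by blast
  have kH: "k \<in> H" using k assms(7) by blast
  define \<sigma> where "\<sigma> = (\<lambda>x\<in>carrier R. if x \<in> H then x \<otimes> k else x)"
  have sig_in: "\<sigma> \<in> cay_aut R S"
  proof -
    have Hm: "a \<otimes> b \<in> H" if "a \<in> H" "b \<in> H" for a b by (rule subgroup.m_closed[OF assms(5) that])
    have Hi: "inv a \<in> H" if "a \<in> H" for a by (rule subgroup.m_inv_closed[OF assms(5) that])
    have notH: "y \<otimes> inv x \<notin> H" if "x \<in> H" "y \<notin> H" "y \<in> carrier R" for x y
    proof
      assume "y \<otimes> inv x \<in> H"
      then have "(y \<otimes> inv x) \<otimes> x \<in> H" using Hm that by blast
      then show False using that Hc by (simp add: G.m_assoc subset_iff)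
    qed
    have notH2: "y \<otimes> inv x \<notin> H" if "y \<in> H" "x \<notin> H" "x \<in> carrier R" for x y
    proof
      assume "y \<otimes> inv x \<in> H"
      then have "inv (inv y \<otimes> (y \<otimes> inv x)) \<in> H" using Hm Hi that by blast
      then show False using that Hc by (simp add: G.m_assoc[symmetric] subset_iff)
    qed
    have ext: "\<sigma> \<in> extensional (carrier R)" unfolding \<sigma>_def by simp
    have img: "\<sigma> ` carrier R \<subseteq> carrier R" unfolding \<sigma>_def using kc by auto
    have inj: "inj_on \<sigma> (carrier R)"
    proof (rule inj_onI)
      fix x y assume xy: "x \<in> carrier R" "y \<in> carrier R" "\<sigma> x = \<sigma> y"
      show "x = y"
      proof (cases "x \<in> H"; cases "y \<in> H")
        assume "x \<in> H" "y \<in> H" then show ?thesis using xy kc unfolding \<sigma>_def by auto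
      next
        assume "x \<in> H" "y \<notin> H" then show ?thesis using xy kc kH Hm unfolding \<sigma>_def by auto
      next
        assume "x \<notin> H" "y \<in> H" then show ?thesis using xy kc kH Hm unfolding \<sigma>_def by auto
      next
        assume "x \<notin> H" "y \<notin> H" then show ?thesis using xy unfolding \<sigma>_def by auto
      qed
    qed
    have bij: "bij_betw \<sigma> (carrier R) (carrier R)"
      unfolding bij_betw_def using inj endo_inj_surj[OF assms(2) img inj] by blast
    have arc: "cay_arc R S (\<sigma> x) (\<sigma> y) \<longleftrightarrow> cay_arc R S x y" if xy: "x \<in> carrier R" "y \<in> carrier R" for x y
    proof (cases "x \<in> H"; cases "y \<in> H")
      assume "x \<in> H" "y \<in> H"
      then have "(y \<otimes> k) \<otimes> inv (x \<otimes> k) = y \<otimes> inv x"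
        using xy kc by (simp add: G.inv_mult_group G.m_assoc G.r_inv[symmetric] del: G.r_inv) (simp add: G.m_assoc[symmetric])
      then show ?thesis using xy \<open>x \<in> H\<close> \<open>y \<in> H\<close> unfolding \<sigma>_def cay_arc_def by simp
    next
      assume h: "x \<in> H" "y \<notin> H"
      have e: "y \<otimes> inv (x \<otimes> k) = (y \<otimes> inv x) \<otimes> (x \<otimes> inv k \<otimes> inv x)"
        using xy kc by (simp add: G.inv_mult_group G.m_assoc G.r_inv[symmetric] del: G.r_inv) (simp add: G.m_assoc[symmetric])
      have kk: "x \<otimes> inv k \<otimes> inv x \<in> K" by (rule conj[OF h(1) subgroup.m_inv_closed[OF assms(4) k(1)]])
      show ?thesis using Rm[OF kk _ notH[OF h xy(2)]] e xy h unfolding \<sigma>_def cay_arc_def by simp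
    next
      assume h: "x \<notin> H" "y \<in> H"
      have aux: "inv y \<otimes> (y \<otimes> inv x) = inv x" using xy by (simp add: G.m_assoc[symmetric])
      have e: "(y \<otimes> k) \<otimes> inv x = (y \<otimes> k \<otimes> inv y) \<otimes> (y \<otimes> inv x)"
        using xy kc aux by (simp add: G.m_assoc)
      have kk: "y \<otimes> k \<otimes> inv y \<in> K" by (rule conj[OF h(2) k(1)])
      show ?thesis using Lm[OF kk _ notH2[OF h(2) h(1) xy(1)]] e xy h unfolding \<sigma>_def cay_arc_def by simp
    next
      assume "x \<notin> H" "y \<notin> H"
      then show ?thesis using xy unfolding \<sigma>_def cay_arc_def by simp
    qed
    show ?thesis unfolding cay_aut_def using ext bij arc by blast
  qed
  have sig_not: "\<sigma> \<notin> right_regular R"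
  proof
    assume "\<sigma> \<in> right_regular R"
    then obtain g where g: "g \<in> carrier R" "\<sigma> = (\<lambda>x\<in>carrier R. x \<otimes> g)"
      unfolding right_regular_def by blast
    have "\<sigma> \<one> = k" unfolding \<sigma>_def using subgroup.one_closed[OF assms(5)] kc by simp
    then have gk: "g = k" using g by simp
    obtain y where y: "y \<in> carrier R" "y \<notin> H" using Hc assms(9) by blast
    have "\<sigma> y = y" unfolding \<sigma>_def using y by simp
    then have "y \<otimes> k = y" using g gk y by simp
    then show False using G.l_cancel_one[OF y(1) kc] k(2) by simp
  qed
  have nD: "\<not> is_DRR R S" unfolding is_DRR_def using sig_in sig_not by blast
  have nDd: "\<not> DRR_detecting R"
  proof
    assume "DRR_detecting R"
    then have "is_DRR R S" using assms(3) assms(12) unfolding DRR_detecting_def by simp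
    then show False using nD by simp
  qed
  have nG: "\<not> is_GRR R S" using nD unfolding is_GRR_def by simp
  have nGd: "\<not> GRR_detecting R" if si: "S = inv_set R S"
  proof
    assume "GRR_detecting R"
    then have "is_GRR R S" using assms(3) assms(12) si unfolding GRR_detecting_def by simp
    then show False using nG by simp
  qed
  show ?thesis using nD nDd nG nGd by simp
qed

end
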